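(* Let $N>2s$, $s\in(0,1)$, $\varepsilon>0$, and let $V\in C(\mathbb{R}^N;[0,\infty))$ satisfy $\liminf_{|x|\to\infty}V(x)|x|^{2s}>0$. Let $K$ be a nonnegative continuous function on $\mathbb{R}^N$ with $\limsup_{|x|\to\infty}K(x)|x|^t<+\infty$ for some $t>2s$. Then the embedding $H^s_{V,\varepsilon}(\mathbb{R}^N)\subset L^2(\mathbb{R}^N,K\,dx)$ is compact.
   Context: $H^s_{V,\varepsilon}(\mathbb{R}^N)$ is the space of $u$ with $(-\Delta)^{s/2}u\in L^2(\mathbb{R}^N)$ and $u\in L^2(\mathbb{R}^N,Vdx)$, with norm $\|u\|^2=\int\varepsilon^{2s}|(-\Delta)^{s/2}u|^2+Vu^2$, where $\int|(-\Delta)^{s/2}u|^2=\int_{\mathbb{R}^{2N}}\frac{|u(x)-u(y)|^2}{|x-y|^{N+2s}}dxdy$. *)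

theory Defs
  imports "HOL-Analysis.Analysis"
begin

text \<open>Gagliardo seminorm squared:
  int_{R^N x R^N} |u x - u y|^2 / |x - y|^(N + 2 s) dx dy, where N = DIM('a).
  (On the null diagonal x = y the integrand is 0 by the convention x / 0 = 0.)\<close>
definition gagliardo_sq :: "real \<Rightarrow> ('a::euclidean_space \<Rightarrow> real) \<Rightarrow> ennreal" where
  "gagliardo_sq s u =
     (\<integral>\<^sup>+ x. \<integral>\<^sup>+ y. ennreal ((u x - u y)\<^sup>2 / norm (x - y) powr (real DIM('a) + 2 * s)) \<partial>lborel \<partial>lborel)"

definition weighted_sq :: "('a::euclidean_space \<Rightarrow> real) \<Rightarrow> ('a \<Rightarrow> real) \<Rightarrow> ennreal" where
  "weighted_sq W u = (\<integral>\<^sup>+ x. ennreal (W x * (u x)\<^sup>2) \<partial>lborel)"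

definition HsV_norm_sq :: "real \<Rightarrow> real \<Rightarrow> ('a::euclidean_space \<Rightarrow> real) \<Rightarrow> ('a \<Rightarrow> real) \<Rightarrow> ennreal" where
  "HsV_norm_sq s eps V u = ennreal (eps powr (2 * s)) * gagliardo_sq s u + weighted_sq V u"

definition HsV :: "real \<Rightarrow> real \<Rightarrow> ('a::euclidean_space \<Rightarrow> real) \<Rightarrow> ('a \<Rightarrow> real) set" where
  "HsV s eps V = {u. u \<in> borel_measurable lborel \<and> gagliardo_sq s u < \<infinity> \<and> weighted_sq V u < \<infinity>}"

definition L2w :: "('a::euclidean_space \<Rightarrow> real) \<Rightarrow> ('a \<Rightarrow> real) set" where
  "L2w K = {u. u \<in> borel_measurable lborel \<and> weighted_sq K u < \<infinity>}"

definition compact_embedding_HsV_L2w ::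
  "real \<Rightarrow> real \<Rightarrow> ('a::euclidean_space \<Rightarrow> real) \<Rightarrow> ('a \<Rightarrow> real) \<Rightarrow> bool" where
  "compact_embedding_HsV_L2w s eps V K \<longleftrightarrow>
     HsV s eps V \<subseteq> L2w K \<and>
     (\<forall>u :: nat \<Rightarrow> 'a \<Rightarrow> real. \<forall>C :: real.
        (\<forall>k. u k \<in> HsV s eps V \<and> HsV_norm_sq s eps V (u k) \<le> ennreal C) \<longrightarrow>
        (\<exists>r v. strict_mono r \<and> v \<in> L2w K \<and>
               (\<lambda>k. weighted_sq K (\<lambda>x. u (r k) x - v x)) \<longlonglongrightarrow> 0))"

end

theory Submission
  imports Defs "HOL-Library.Diagonal_Subsequence"
begin


definition gk :: "real \<Rightarrow> ('a::euclidean_space \<Rightarrow> real) \<Rightarrow> 'a \<Rightarrow> 'a \<Rightarrow> ennreal" where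
  "gk s u x y = ennreal ((u x - u y)\<^sup>2 / norm (x - y) powr (real DIM('a) + 2 * s))"

lemma gagliardo_gk: "gagliardo_sq s u = (\<integral>\<^sup>+ x. \<integral>\<^sup>+ y. gk s u x y \<partial>lborel \<partial>lborel)"
  by (simp add: gagliardo_sq_def gk_def)

lemma gk_meas[measurable]:
  assumes [measurable]: "u \<in> borel_measurable lborel"
  shows "(\<lambda>(x, y). gk s u x y) \<in> borel_measurable (lborel \<Otimes>\<^sub>M lborel)"
  unfolding gk_def by measurable

lemma gk_meas2[measurable]:
  assumes [measurable]: "u \<in> borel_measurable lborel"
  shows "gk s u x \<in> borel_measurable lborel"
  unfolding gk_def by measurable

lemma gk_bound:
  fixes u :: "'a::euclidean_space \<Rightarrow> real"
  assumes "norm (x - y) \<le> D" "0 < s"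
  shows "ennreal ((u x - u y)\<^sup>2) \<le> ennreal (D powr (real DIM('a) + 2 * s)) * gk s u x y"
proof (cases "x = y")
  case True then show ?thesis by simp
next
  case False
  define n where "n = norm (x - y)"
  define p where "p = real DIM('a) + 2 * s"
  have n: "n > 0" using False by (simp add: n_def)
  have p: "p > 0" using assms by (simp add: p_def add_pos_pos)
  have "(u x - u y)\<^sup>2 = n powr p * ((u x - u y)\<^sup>2 / n powr p)" using n by simp
  also have "\<dots> \<le> D powr p * ((u x - u y)\<^sup>2 / n powr p)"
    by (intro mult_right_mono powr_mono2) (use assms n p in \<open>auto simp: n_def\<close>)
  finally have "(u x - u y)\<^sup>2 \<le> D powr p * ((u x - u y)\<^sup>2 / n powr p)" .
  then have "ennreal ((u x - u y)\<^sup>2) \<le> ennreal (D powr p * ((u x - u y)\<^sup>2 / n powr p))"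
    by (rule ennreal_leI)
  also have "\<dots> = ennreal (D powr p) * gk s u x y"
    unfolding gk_def n_def p_def by (rule ennreal_mult) auto
  finally show ?thesis unfolding p_def .
qed

lemma sel:
  assumes q[measurable]: "q \<in> sets lborel" "emeasure lborel q \<noteq> 0" "emeasure lborel q < \<infinity>"
    and h[measurable]: "h \<in> borel_measurable lborel"
    and int: "(\<integral>\<^sup>+y. indicator q y * h y \<partial>lborel) \<le> X" and X: "X < \<infinity>"
  shows "\<exists>y\<in>q. h y * emeasure lborel q \<le> X"
proof (rule ccontr)
  assume "\<not> ?thesis"
  then have lt: "\<forall>y\<in>q. X < h y * emeasure lborel q" by (auto simp: not_le)
  obtain mq where mq: "emeasure lborel q = ennreal mq" "0 \<le> mq"
    using q(3) by (cases "emeasure lborel q") auto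
  have mq0: "mq > 0" using mq q(2) by (auto simp: less_le)
  obtain x where x: "X = ennreal x" "0 \<le> x" using X by (cases X) auto
  define f where "f y = ennreal (x / mq) * indicator q y" for y
  have intf: "(\<integral>\<^sup>+y. f y \<partial>lborel) = X"
    unfolding f_def apply (subst nn_integral_cmult_indicator)
    using mq mq0 x q by (auto simp: ennreal_mult[symmetric])
  have fle: "f y \<le> indicator q y * h y" for y
  proof (cases "y \<in> q")
    case True
    show ?thesis
    proof (rule ccontr)
      assume "\<not> ?thesis"
      then have "h y \<le> ennreal (x / mq)" using True by (simp add: f_def not_le less_imp_le)
      then have "h y * ennreal mq \<le> ennreal (x / mq) * ennreal mq" by (rule mult_right_mono) simp
      also have "\<dots> = X" using mq0 x by (simp add: ennreal_mult[symmetric])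
      finally show False using lt True mq by (simp add: not_le[symmetric])
    qed
  qed (simp add: f_def)
  have "(\<integral>\<^sup>+y. f y \<partial>lborel) < (\<integral>\<^sup>+y. indicator q y * h y \<partial>lborel)"
  proof (rule nn_integral_less)
    show "f \<in> borel_measurable lborel" unfolding f_def by measurable
    show "(\<lambda>y. indicator q y * h y) \<in> borel_measurable lborel" by measurable
    show "integral\<^sup>N lborel f \<noteq> \<infinity>" using intf X by simp
    show "AE y in lborel. f y \<le> indicator q y * h y" using fle by simp
    show "\<not> (AE y in lborel. indicator q y * h y \<le> f y)"
    proof
      assume "AE y in lborel. indicator q y * h y \<le> f y"
      then have "AE y in lborel. y \<notin> q"
      proof (rule AE_mp, intro AE_I2 impI)
        fix y assume a: "indicator q y * h y \<le> f y"
        show "y \<notin> q"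
        proof
          assume yq: "y \<in> q"
          then have "h y \<le> ennreal (x / mq)" using a by (simp add: f_def)
          then have "h y * ennreal mq \<le> ennreal (x / mq) * ennreal mq" by (rule mult_right_mono) simp
          also have "\<dots> = X" using mq0 x by (simp add: ennreal_mult[symmetric])
          finally show False using lt yq mq by (simp add: not_le[symmetric])
        qed
      qed
      then have "emeasure lborel q = 0"
        using AE_iff_measurable[of q lborel "\<lambda>y. y \<notin> q"] q(1) by simp
      then show False using q(2) by simp
    qed
  qed
  then show False using int intf by simp
qed

lemma cube_const:
  fixes u :: "'a::euclidean_space \<Rightarrow> real"
  assumes q[measurable]: "q \<in> sets lborel" "ennreal \<nu> \<le> emeasure lborel q" "emeasure lborel q < \<infinity>" "\<nu> > 0"
    and D: "\<forall>x\<in>q. \<forall>y\<in>q. norm (x - y) \<le> D" "0 < D" "0 < s"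
    and u[measurable]: "u \<in> borel_measurable lborel"
  shows "\<exists>c. (\<integral>\<^sup>+x. indicator q x * ennreal ((u x - c)\<^sup>2) \<partial>lborel)
     \<le> ennreal (D powr (real DIM('a) + 2 * s) / \<nu>) *
        (\<integral>\<^sup>+y. \<integral>\<^sup>+x. indicator q y * indicator q x * gk s u y x \<partial>lborel \<partial>lborel)"
proof -
  define p where "p = real DIM('a) + 2 * s"
  define T where "T = (\<integral>\<^sup>+y. \<integral>\<^sup>+x. indicator q y * indicator q x * gk s u y x \<partial>lborel \<partial>lborel)"
  have Dp: "D powr p / \<nu> > 0" using D q by simp
  show ?thesis
  proof (cases "T = \<infinity>")
    case True
    then show ?thesis using Dp unfolding T_def[symmetric] p_def[symmetric]
      using D(2) q(4) by (simp add: ennreal_mult_top)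
  next
    case False
    define h where "h y = (\<integral>\<^sup>+x. indicator q x * ennreal ((u x - u y)\<^sup>2) \<partial>lborel)" for y
    have hm[measurable]: "h \<in> borel_measurable lborel" unfolding h_def by measurable
    have "(\<integral>\<^sup>+y. indicator q y * h y \<partial>lborel)
        = (\<integral>\<^sup>+y. \<integral>\<^sup>+x. indicator q y * (indicator q x * ennreal ((u x - u y)\<^sup>2)) \<partial>lborel \<partial>lborel)"
      unfolding h_def by (intro nn_integral_cong nn_integral_cmult[symmetric]) measurable
    also have "\<dots> \<le> (\<integral>\<^sup>+y. \<integral>\<^sup>+x. ennreal (D powr p) * (indicator q y * indicator q x * gk s u y x) \<partial>lborel \<partial>lborel)"
    proof (intro nn_integral_mono)
      fix y x
      show "indicator q y * (indicator q x * ennreal ((u x - u y)\<^sup>2))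
         \<le> ennreal (D powr p) * (indicator q y * indicator q x * gk s u y x)"
      proof (cases "x \<in> q \<and> y \<in> q")
        case True
        then have "ennreal ((u y - u x)\<^sup>2) \<le> ennreal (D powr p) * gk s u y x"
          unfolding p_def using D by (intro gk_bound) auto
        then show ?thesis using True by (simp add: power2_commute)
      qed auto
    qed
    also have "\<dots> = ennreal (D powr p) * T"
      unfolding T_def
      by (subst nn_integral_cmult[symmetric], measurable)
         (intro nn_integral_cong nn_integral_cmult, measurable)
    finally have int: "(\<integral>\<^sup>+y. indicator q y * h y \<partial>lborel) \<le> ennreal (D powr p) * T" .
    have q0: "emeasure lborel q \<noteq> 0" using q
      by (metis ennreal_eq_0_iff not_le order_le_less order.trans zero_less_iff_neq_zero)
    obtain y where y: "y \<in> q" "h y * emeasure lborel q \<le> ennreal (D powr p) * T"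
      using sel[OF q(1) q0 q(3) hm int] False by (auto simp: ennreal_mult_less_top top.not_eq_extremum)
    have "h y * ennreal \<nu> \<le> h y * emeasure lborel q" by (intro mult_left_mono q(2)) simp
    then have le: "h y * ennreal \<nu> \<le> ennreal (D powr p) * T" using y(2) by simp
    have "h y = h y * ennreal \<nu> * ennreal (1 / \<nu>)"
      using q(4) by (simp add: mult.assoc ennreal_mult[symmetric])
    also have "\<dots> \<le> ennreal (D powr p) * T * ennreal (1 / \<nu>)" by (intro mult_right_mono le) simp
    also have "\<dots> = ennreal (D powr p / \<nu>) * T"
      using q(4) by (simp add: ennreal_mult[symmetric] mult_ac divide_inverse)
    finally show ?thesis unfolding h_def T_def p_def by blast
  qed
qed

lemma sq_ineq1: "(a::real)\<^sup>2 \<le> 2 * (a - b)\<^sup>2 + 2 * b\<^sup>2"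
proof -
  have "2 * (a - b)\<^sup>2 + 2 * b\<^sup>2 - a\<^sup>2 = (a - 2 * b)\<^sup>2" by (simp add: power2_eq_square algebra_simps)
  then show ?thesis by (metis diff_ge_0_iff_ge zero_le_power2)
qed

lemma loc_bound:
  fixes u :: "'a::euclidean_space \<Rightarrow> real"
  assumes Q[measurable]: "Q \<in> sets lborel" and A[measurable]: "A \<in> sets lborel"
    and D: "\<forall>x\<in>Q. \<forall>y\<in>A. norm (x - y) \<le> D" "0 < s"
    and cA: "cA > 0" "\<forall>y\<in>A. cA \<le> V y" and Vm[measurable]: "V \<in> borel_measurable lborel"
    and u[measurable]: "u \<in> borel_measurable lborel"
  shows "emeasure lborel A * (\<integral>\<^sup>+x. indicator Q x * ennreal ((u x)\<^sup>2) \<partial>lborel)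
    \<le> 2 * ennreal (D powr (real DIM('a) + 2 * s)) * gagliardo_sq s u
       + emeasure lborel Q * (2 * ennreal (1 / cA) * weighted_sq V u)"
proof -
  define p where "p = real DIM('a) + 2 * s"
  define W where "W = weighted_sq V u"
  have pt: "(indicator Q x * ennreal ((u x)\<^sup>2)) * indicator A y
     \<le> 2 * ennreal (D powr p) * gk s u x y + indicator Q x * (2 * ennreal (1 / cA) * (indicator A y * ennreal (V y * (u y)\<^sup>2)))"
    for x y
  proof (cases "x \<in> Q \<and> y \<in> A")
    case True
    have V: "cA \<le> V y" using cA True by auto
    have "(u x)\<^sup>2 \<le> 2 * (u x - u y)\<^sup>2 + 2 * (u y)\<^sup>2"
      using sq_ineq1 .
    then have "ennreal ((u x)\<^sup>2) \<le> ennreal (2 * (u x - u y)\<^sup>2 + 2 * (u y)\<^sup>2)" by (rule ennreal_leI)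
    also have "\<dots> = 2 * ennreal ((u x - u y)\<^sup>2) + 2 * ennreal ((u y)\<^sup>2)"
      by (subst ennreal_plus; simp add: ennreal_mult)
    also have "\<dots> \<le> 2 * (ennreal (D powr p) * gk s u x y) + 2 * (ennreal (1 / cA) * ennreal (V y * (u y)\<^sup>2))"
    proof (intro add_mono mult_left_mono)
      show "ennreal ((u x - u y)\<^sup>2) \<le> ennreal (D powr p) * gk s u x y"
        unfolding p_def using D True by (intro gk_bound) auto
      have "(u y)\<^sup>2 \<le> (1 / cA) * (V y * (u y)\<^sup>2)"
        using V cA by (simp add: field_simps mult_right_mono)
      then have "ennreal ((u y)\<^sup>2) \<le> ennreal ((1 / cA) * (V y * (u y)\<^sup>2))" by (rule ennreal_leI)
      moreover have "ennreal ((1 / cA) * (V y * (u y)\<^sup>2)) = ennreal (1 / cA) * ennreal (V y * (u y)\<^sup>2)"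
        by (rule ennreal_mult) (use cA V in auto)
      ultimately show "ennreal ((u y)\<^sup>2) \<le> ennreal (1 / cA) * ennreal (V y * (u y)\<^sup>2)"
        by simp
    qed auto
    finally show ?thesis using True by (simp add: mult_ac)
  qed auto
  have step: "(indicator Q x * ennreal ((u x)\<^sup>2)) * emeasure lborel A
     \<le> 2 * ennreal (D powr p) * (\<integral>\<^sup>+y. gk s u x y \<partial>lborel) + indicator Q x * (2 * ennreal (1 / cA) * W)" for x
  proof -
    have "(indicator Q x * ennreal ((u x)\<^sup>2)) * emeasure lborel A
       = (\<integral>\<^sup>+y. (indicator Q x * ennreal ((u x)\<^sup>2)) * indicator A y \<partial>lborel)"
      by (rule nn_integral_cmult_indicator[symmetric]) (use A in simp)
    also have "\<dots> \<le> (\<integral>\<^sup>+y. 2 * ennreal (D powr p) * gk s u x y + indicator Q x * (2 * ennreal (1 / cA) * (indicator A y * ennreal (V y * (u y)\<^sup>2))) \<partial>lborel)"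
      by (intro nn_integral_mono pt)
    also have "\<dots> = 2 * ennreal (D powr p) * (\<integral>\<^sup>+y. gk s u x y \<partial>lborel)
        + indicator Q x * (2 * ennreal (1 / cA) * (\<integral>\<^sup>+y. indicator A y * ennreal (V y * (u y)\<^sup>2) \<partial>lborel))"
      by (simp add: nn_integral_add nn_integral_cmult)
    also have "\<dots> \<le> 2 * ennreal (D powr p) * (\<integral>\<^sup>+y. gk s u x y \<partial>lborel) + indicator Q x * (2 * ennreal (1 / cA) * W)"
      unfolding W_def weighted_sq_def
      by (intro add_mono mult_left_mono nn_integral_mono order_refl)
         (auto simp: indicator_def)
    finally show ?thesis .
  qed
  have "emeasure lborel A * (\<integral>\<^sup>+x. indicator Q x * ennreal ((u x)\<^sup>2) \<partial>lborel)
      = (\<integral>\<^sup>+x. (indicator Q x * ennreal ((u x)\<^sup>2)) * emeasure lborel A \<partial>lborel)"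
    by (subst nn_integral_multc) (auto simp: mult_ac)
  also have "\<dots> \<le> (\<integral>\<^sup>+x. 2 * ennreal (D powr p) * (\<integral>\<^sup>+y. gk s u x y \<partial>lborel) + indicator Q x * (2 * ennreal (1 / cA) * W) \<partial>lborel)"
    by (intro nn_integral_mono step)
  also have "\<dots> = 2 * ennreal (D powr p) * gagliardo_sq s u + emeasure lborel Q * (2 * ennreal (1 / cA) * W)"
    unfolding gagliardo_gk
    using Q by (subst nn_integral_add) (auto simp: nn_integral_cmult nn_integral_multc mult_ac)
  finally show ?thesis unfolding p_def W_def .
qed

definition cube :: "real \<Rightarrow> real \<Rightarrow> ('a::euclidean_space \<Rightarrow> int) \<Rightarrow> 'a set" where
  "cube L \<delta> z = {x. \<forall>b\<in>Basis. -L + \<delta> * z b \<le> x \<bullet> b \<and> x \<bullet> b < -L + \<delta> * (z b + 1)}"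

definition Qset :: "real \<Rightarrow> 'a::euclidean_space set" where
  "Qset L = {x. \<forall>b\<in>Basis. -L \<le> x \<bullet> b \<and> x \<bullet> b < L}"

lemma floor_char:
  fixes \<delta> L t :: real and k :: int
  assumes "\<delta> > 0"
  shows "(-L + \<delta> * k \<le> t \<and> t < -L + \<delta> * (k + 1)) \<longleftrightarrow> floor ((t + L) / \<delta>) = k"
  using assms by (simp add: floor_eq_iff pos_le_divide_eq pos_divide_less_eq algebra_simps)

lemma cube_sets[measurable]: "cube L \<delta> z \<in> sets lborel"
proof -
  have "cube L \<delta> z = (\<Inter>b\<in>Basis. {x. -L + \<delta> * z b \<le> x \<bullet> b} \<inter> {x. x \<bullet> b < -L + \<delta> * (z b + 1)})"
    unfolding cube_def by auto
  also have "\<dots> \<in> sets lborel"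
    by (intro sets.finite_INT) (auto intro!: sets.Int simp: finite_Basis)
  finally show ?thesis .
qed

lemma Qset_sets[measurable]: "Qset L \<in> sets lborel"
proof -
  have "Qset L = (\<Inter>b\<in>Basis. {x. -L \<le> x \<bullet> b} \<inter> {x. x \<bullet> b < L})"
    unfolding Qset_def by auto
  also have "\<dots> \<in> sets lborel"
    by (intro sets.finite_INT) (auto intro!: sets.Int simp: finite_Basis)
  finally show ?thesis .
qed

lemma Qset_cbox: "Qset L \<subseteq> cbox (- (\<Sum>b\<in>Basis. L *\<^sub>R b)) (\<Sum>b\<in>Basis. L *\<^sub>R b)"
proof
  fix x assume x: "x \<in> Qset L"
  have e: "(\<Sum>b\<in>Basis. L *\<^sub>R b) \<bullet> i = L" if "i \<in> Basis" for i :: 'a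
    using inner_sum_left_Basis[OF that, of "\<lambda>_. L"] .
  show "x \<in> cbox (- (\<Sum>b\<in>Basis. L *\<^sub>R b)) (\<Sum>b\<in>Basis. L *\<^sub>R b)"
    unfolding mem_box using x by (auto simp: Qset_def e inner_minus_left less_imp_le)
qed

lemma Qset_finite: "emeasure lborel (Qset L) < \<infinity>"
  by (rule le_less_trans[OF emeasure_mono[OF Qset_cbox] emeasure_lborel_cbox_finite]) simp

lemma cube_measure:
  assumes "\<delta> > 0"
  shows "ennreal (\<delta> ^ DIM('a)) \<le> emeasure lborel (cube L \<delta> z :: 'a::euclidean_space set)"
    "emeasure lborel (cube L \<delta> z :: 'a set) < \<infinity>"
proof -
  define a :: 'a where "a = (\<Sum>b\<in>Basis. (-L + \<delta> * z b) *\<^sub>R b)"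
  define a' :: 'a where "a' = (\<Sum>b\<in>Basis. (-L + \<delta> * (z b + 1)) *\<^sub>R b)"
  have bc1: "box a a' \<subseteq> cube L \<delta> z"
  proof
    fix x assume x: "x \<in> box a a'"
    show "x \<in> cube L \<delta> z" unfolding cube_def
    proof (intro CollectI ballI)
      fix b :: 'a assume b: "b \<in> Basis"
      then have "a \<bullet> b < x \<bullet> b" "x \<bullet> b < a' \<bullet> b" using x by (auto simp: mem_box)
      then show "-L + \<delta> * z b \<le> x \<bullet> b \<and> x \<bullet> b < -L + \<delta> * (z b + 1)"
        using b by (simp add: a_def a'_def)
    qed
  qed
  have bc2: "cube L \<delta> z \<subseteq> cbox a a'" unfolding cube_def a_def a'_def by (auto simp: mem_box less_imp_le)
  have ia: "a \<bullet> b = -L + \<delta> * z b" if "b \<in> Basis" for b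
    unfolding a_def using that by (rule inner_sum_left_Basis)
  have ia': "a' \<bullet> b = -L + \<delta> * (z b + 1)" if "b \<in> Basis" for b
    unfolding a'_def using that by (rule inner_sum_left_Basis)
  have mb: "emeasure lborel (box a a') = ennreal (\<delta> ^ DIM('a))"
  proof -
    have "emeasure lborel (box a a') = ennreal (\<Prod>b\<in>Basis. (a' - a) \<bullet> b)"
      using assms by (intro emeasure_lborel_box) (simp add: ia ia' algebra_simps)
    also have "(\<Prod>b\<in>Basis. (a' - a) \<bullet> b) = (\<Prod>b\<in>(Basis::'a set). \<delta>)"
      by (intro prod.cong refl) (simp add: inner_diff_left ia ia' algebra_simps)
    finally show ?thesis by simp
  qed
  show "ennreal (\<delta> ^ DIM('a)) \<le> emeasure lborel (cube L \<delta> z :: 'a::euclidean_space set)"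
    unfolding mb[symmetric] by (rule emeasure_mono[OF bc1]) (use cube_sets[of L \<delta> z] in simp)
  have "emeasure lborel (cube L \<delta> z) \<le> emeasure lborel (cbox a a')"
    by (rule emeasure_mono[OF bc2]) simp
  then show "emeasure lborel (cube L \<delta> z :: 'a set) < \<infinity>"
    using emeasure_lborel_cbox_finite le_less_trans by blast
qed

lemma cube_diam:
  fixes x y :: "'a::euclidean_space"
  assumes "x \<in> cube L \<delta> z" "y \<in> cube L \<delta> z"
  shows "norm (x - y) \<le> real DIM('a) * \<delta>"
proof -
  have "norm (x - y) \<le> (\<Sum>b\<in>Basis. \<bar>(x - y) \<bullet> b\<bar>)" by (rule norm_le_l1)
  also have "\<dots> \<le> (\<Sum>b\<in>(Basis::'a set). \<delta>)"
  proof (rule sum_mono)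
    fix b :: 'a assume "b \<in> Basis"
    then have "-L + \<delta> * z b \<le> x \<bullet> b" "x \<bullet> b < -L + \<delta> * (z b + 1)"
      "-L + \<delta> * z b \<le> y \<bullet> b" "y \<bullet> b < -L + \<delta> * (z b + 1)"
      using assms unfolding cube_def by auto
    then show "\<bar>(x - y) \<bullet> b\<bar> \<le> \<delta>"
      by (auto simp: inner_diff_left algebra_simps abs_le_iff)
  qed
  finally show ?thesis by simp
qed

lemma cube_sub:
  assumes "z \<in> Basis \<rightarrow>\<^sub>E {0..<int m}" "m > 0" "L > 0"
  shows "cube L (2 * L / m) z \<subseteq> Qset L"
proof
  fix x assume x: "x \<in> cube L (2 * L / m) z"
  show "x \<in> Qset L" unfolding Qset_def
  proof (intro CollectI ballI conjI)
    fix b :: 'a assume b: "b \<in> Basis"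
    have "z b \<in> {0..<int m}" using assms(1) b by (rule PiE_mem)
    then have z: "0 \<le> z b" "z b + 1 \<le> m" by auto
    have "-L \<le> -L + 2 * L / m * z b" using z assms by simp
    then show "-L \<le> x \<bullet> b" using x b unfolding cube_def by force
    have "2 * L / m * (z b + 1) \<le> 2 * L / m * m"
      using z assms by (intro mult_left_mono) (auto simp del: of_int_add simp: of_int_add[symmetric])
    then have "-L + 2 * L / m * (z b + 1) \<le> L" using assms by simp
    then show "x \<bullet> b < L" using x b unfolding cube_def by force
  qed
qed

lemma cube_uniq:
  assumes "z \<in> Basis \<rightarrow>\<^sub>E {0..<int m}" "z' \<in> Basis \<rightarrow>\<^sub>E {0..<int m}" "\<delta> > 0"
    "x \<in> cube L \<delta> z" "x \<in> cube L \<delta> z'"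
  shows "z = z'"
proof (rule PiE_ext[OF assms(1,2)])
  fix b :: 'a assume b: "b \<in> Basis"
  have "floor ((x \<bullet> b + L) / \<delta>) = z b" using assms(4) b floor_char[OF assms(3)] unfolding cube_def by blast
  moreover have "floor ((x \<bullet> b + L) / \<delta>) = z' b" using assms(5) b floor_char[OF assms(3)] unfolding cube_def by blast
  ultimately show "z b = z' b" by simp
qed

lemma cube_cover:
  assumes "x \<in> Qset L" "m > 0" "L > 0"
  shows "\<exists>z\<in>Basis \<rightarrow>\<^sub>E {0..<int m}. x \<in> cube L (2 * L / m) z"
proof -
  define \<delta> where "\<delta> = 2 * L / m"
  have d: "\<delta> > 0" using assms by (simp add: \<delta>_def)
  define z where "z = (\<lambda>b\<in>Basis. floor ((x \<bullet> b + L) / \<delta>))"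
  have "z \<in> Basis \<rightarrow>\<^sub>E {0..<int m}"
  proof
    fix b :: 'a assume b: "b \<in> Basis"
    have xb: "-L \<le> x \<bullet> b" "x \<bullet> b < L" using assms(1) b by (auto simp: Qset_def)
    have "0 \<le> (x \<bullet> b + L) / \<delta>" using xb d by simp
    moreover have "(x \<bullet> b + L) / \<delta> < m" using xb d assms by (simp add: \<delta>_def field_simps)
    ultimately show "z b \<in> {0..<int m}" using b by (auto simp: z_def floor_less_iff)
  qed (simp add: z_def)
  moreover have "x \<in> cube L \<delta> z"
    unfolding cube_def using floor_char[OF d] by (auto simp: z_def)
  ultimately show ?thesis unfolding \<delta>_def by blast
qed

lemma ind_sum:
  fixes x :: "'a::euclidean_space"
  assumes "m > 0" "L > 0"
  shows "(indicator (Qset L) x :: ennreal) = (\<Sum>z\<in>Basis \<rightarrow>\<^sub>E {0..<int m}. indicator (cube L (2 * L / m) z) x)"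
proof (cases "x \<in> Qset L")
  case True
  then obtain z0 where z0: "z0 \<in> Basis \<rightarrow>\<^sub>E {0..<int m}" "x \<in> cube L (2 * L / m) z0"
    using cube_cover assms by blast
  have d: "2 * L / m > 0" using assms by simp
  have "(\<Sum>z\<in>Basis \<rightarrow>\<^sub>E {0..<int m}. indicator (cube L (2 * L / m) z) x :: ennreal)
      = (\<Sum>z\<in>Basis \<rightarrow>\<^sub>E {0..<int m}. if z = z0 then 1 else 0)"
  proof (rule sum.cong[OF refl])
    fix z assume z: "z \<in> (Basis::'a set) \<rightarrow>\<^sub>E {0..<int m}"
    show "(indicator (cube L (2 * L / m) z) x :: ennreal) = (if z = z0 then 1 else 0)"
    proof (cases "z = z0")
      case True then show ?thesis using z0(2) by simp
    next
      case False
      then have "x \<notin> cube L (2 * L / m) z" using cube_uniq[OF z z0(1) d _ z0(2)] by blast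
      then show ?thesis using False by simp
    qed
  qed
  also have "\<dots> = 1" using z0(1) by (simp add: finite_PiE)
  finally show ?thesis using True by simp
next
  case False
  then have "x \<notin> cube L (2 * L / m) z" if "z \<in> Basis \<rightarrow>\<^sub>E {0..<int m}" for z
    using cube_sub[OF that assms] by auto
  then show ?thesis using False by (simp add: indicator_def)
qed

lemma ind_sum2:
  fixes x y :: "'a::euclidean_space"
  assumes "m > 0" "L > 0"
  shows "(\<Sum>z\<in>Basis \<rightarrow>\<^sub>E {0..<int m}. indicator (cube L (2 * L / m) z) x * indicator (cube L (2 * L / m) z) y :: ennreal) \<le> 1"
proof -
  have "(\<Sum>z\<in>Basis \<rightarrow>\<^sub>E {0..<int m}. indicator (cube L (2 * L / m) z) x * indicator (cube L (2 * L / m) z) y :: ennreal)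
     \<le> (\<Sum>z\<in>Basis \<rightarrow>\<^sub>E {0..<int m}. indicator (cube L (2 * L / m) z) x)"
    by (intro sum_mono) (auto simp: indicator_def)
  also have "\<dots> = indicator (Qset L) x" by (rule ind_sum[OF assms, symmetric])
  also have "\<dots> \<le> 1" by (simp add: indicator_def)
  finally show ?thesis .
qed

lemma out_Q:
  assumes "x \<notin> Qset L"
  shows "L \<le> norm x"
proof -
  obtain b where b: "b \<in> Basis" "\<not> (-L \<le> x \<bullet> b \<and> x \<bullet> b < L)" using assms by (auto simp: Qset_def)
  then have "L \<le> \<bar>x \<bullet> b\<bar>" by auto
  also have "\<dots> \<le> norm x" using b by (intro Basis_le_norm)
  finally show ?thesis .
qed

lemma in_Q:
  fixes x :: "'a::euclidean_space"
  assumes "x \<in> Qset L"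
  shows "norm x \<le> real DIM('a) * L"
proof -
  have "norm x \<le> (\<Sum>b\<in>Basis. \<bar>x \<bullet> b\<bar>)" by (rule norm_le_l1)
  also have "\<dots> \<le> (\<Sum>b\<in>(Basis::'a set). L)"
    by (rule sum_mono) (use assms in \<open>auto simp: Qset_def abs_le_iff\<close>)
  finally show ?thesis by simp
qed



lemma subseq_conv_finite:
  fixes f :: "nat \<Rightarrow> 'b \<Rightarrow> real"
  assumes "finite I" "\<forall>z\<in>I. bounded (range (\<lambda>k. f k z))"
  shows "\<exists>r. strict_mono r \<and> (\<forall>z\<in>I. \<exists>l. (\<lambda>k. f (r k) z) \<longlonglongrightarrow> l)"
  using assms
proof (induction I rule: finite_induct)
  case empty
  then show ?case by (intro exI[of _ id]) (auto simp: strict_mono_def)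
next
  case (insert z0 F)
  then obtain r where r: "strict_mono r" "\<forall>z\<in>F. \<exists>l. (\<lambda>k. f (r k) z) \<longlonglongrightarrow> l" by auto
  have "bounded (range (\<lambda>k. f (r k) z0))"
    by (rule bounded_subset[of "range (\<lambda>k. f k z0)"]) (use insert(4) in auto)
  then obtain l r' where r': "strict_mono r'" "((\<lambda>k. f (r k) z0) \<circ> r') \<longlonglongrightarrow> l"
    using bounded_imp_convergent_subsequence by blast
  have "strict_mono (r \<circ> r')" using r(1) r'(1) by (rule strict_mono_o)
  moreover have "\<forall>z\<in>insert z0 F. \<exists>l. (\<lambda>k. f ((r \<circ> r') k) z) \<longlonglongrightarrow> l"
  proof
    fix z assume "z \<in> insert z0 F"
    then show "\<exists>l. (\<lambda>k. f ((r \<circ> r') k) z) \<longlonglongrightarrow> l"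
    proof
      assume "z = z0" then show ?thesis using r'(2) by (auto simp: o_def)
    next
      assume "z \<in> F"
      then obtain l' where "(\<lambda>k. f (r k) z) \<longlonglongrightarrow> l'" using r(2) by auto
      from LIMSEQ_subseq_LIMSEQ[OF this r'(1)] show ?thesis by (auto simp: o_def)
    qed
  qed
  ultimately show ?case by blast
qed

lemma tail_sum:
  fixes a :: "nat \<Rightarrow> 'b \<Rightarrow> real"
  assumes "finite I" "\<forall>z\<in>I. \<exists>l. (\<lambda>k. a k z) \<longlonglongrightarrow> l" "\<tau> > 0"
  shows "\<exists>N0. \<forall>i\<ge>N0. \<forall>j\<ge>N0. (\<Sum>z\<in>I. (a i z - a j z)\<^sup>2) \<le> \<tau>"
proof -
  obtain l where l: "\<forall>z\<in>I. (\<lambda>k. a k z) \<longlonglongrightarrow> l z" using assms(2) by metis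
  have "(\<lambda>k. \<Sum>z\<in>I. (a k z - l z)\<^sup>2) \<longlonglongrightarrow> (\<Sum>z\<in>I. (l z - l z)\<^sup>2)"
    using l by (intro tendsto_intros) auto
  then have "(\<lambda>k. \<Sum>z\<in>I. (a k z - l z)\<^sup>2) \<longlonglongrightarrow> 0" by simp
  then have "eventually (\<lambda>k. (\<Sum>z\<in>I. (a k z - l z)\<^sup>2) < \<tau> / 4) sequentially"
    using assms(3) by (intro order_tendstoD) auto
  then obtain N0 where N0: "\<And>k. k \<ge> N0 \<Longrightarrow> (\<Sum>z\<in>I. (a k z - l z)\<^sup>2) < \<tau> / 4"
    by (auto simp: eventually_sequentially)
  have "(\<Sum>z\<in>I. (a i z - a j z)\<^sup>2) \<le> \<tau>" if "i \<ge> N0" "j \<ge> N0" for i j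
  proof -
    have "(\<Sum>z\<in>I. (a i z - a j z)\<^sup>2) \<le> (\<Sum>z\<in>I. 2 * (a i z - l z)\<^sup>2 + 2 * (a j z - l z)\<^sup>2)"
    proof (rule sum_mono)
      fix z
      have "(a i z - a j z)\<^sup>2 \<le> 2 * ((a i z - a j z) - (a i z - l z))\<^sup>2 + 2 * (a i z - l z)\<^sup>2"
        by (rule sq_ineq1)
      also have "((a i z - a j z) - (a i z - l z))\<^sup>2 = (a j z - l z)\<^sup>2"
        by (simp add: power2_eq_square algebra_simps)
      finally show "(a i z - a j z)\<^sup>2 \<le> 2 * (a i z - l z)\<^sup>2 + 2 * (a j z - l z)\<^sup>2" by simp
    qed
    also have "\<dots> = 2 * (\<Sum>z\<in>I. (a i z - l z)\<^sup>2) + 2 * (\<Sum>z\<in>I. (a j z - l z)\<^sup>2)"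
      by (simp add: sum.distrib sum_distrib_left)
    also have "\<dots> \<le> \<tau>" using N0[OF that(1)] N0[OF that(2)] by simp
    finally show ?thesis .
  qed
  then show ?thesis by blast
qed

lemma kappa_eq:
  assumes "\<delta> > 0" "n > 0"
  shows "(real n * \<delta>) powr (real n + 2 * s) / \<delta> ^ n = real n powr (real n + 2 * s) * \<delta> powr (2 * s)"
proof -
  have "(real n * \<delta>) powr (real n + 2 * s) = real n powr (real n + 2 * s) * (\<delta> powr real n * \<delta> powr (2 * s))"
    using assms by (simp add: powr_mult powr_add)
  moreover have "\<delta> powr real n = \<delta> ^ n" using assms by (simp add: powr_realpow)
  ultimately show ?thesis using assms by simp
qed



lemma cube_sets_borel[simp]: "cube L \<delta> z \<in> sets borel"
  using cube_sets[of L \<delta> z] by simp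

lemma Qset_sets_borel[simp]: "Qset L \<in> sets borel"
  using Qset_sets[of L] by simp

lemma en_final:
  fixes M A B e C :: real
  assumes "0 \<le> M" "0 \<le> A" "0 \<le> B" "0 \<le> e" "0 \<le> C"
  shows "ennreal M * (ennreal A + ennreal A + ennreal B) + ennreal e * ennreal C = ennreal (M * (2 * A + B) + e * C)"
proof -
  have "ennreal (2 * A) = ennreal (A + A)" by (rule arg_cong[where f=ennreal]) simp
  also have "\<dots> = ennreal A + ennreal A" by (rule ennreal_plus) (use assms in auto)
  finally have "ennreal A + ennreal A = ennreal (2 * A)" by simp
  then show ?thesis using assms by (simp add: ennreal_mult' del: ennreal_numeral)
qed
lemma en3: "0 \<le> x \<Longrightarrow> 0 \<le> y \<Longrightarrow> 3 * (ennreal x * ennreal y) = ennreal (3 * x * y)"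
  by (simp add: ennreal_mult' mult.assoc)

lemma sq3: "((p::real) - q + r)\<^sup>2 \<le> 3 * p\<^sup>2 + 3 * q\<^sup>2 + 3 * r\<^sup>2"
proof -
  have "3 * p\<^sup>2 + 3 * q\<^sup>2 + 3 * r\<^sup>2 - (p - q + r)\<^sup>2 = (p + q)\<^sup>2 + (p - r)\<^sup>2 + (q + r)\<^sup>2"
    by (simp add: power2_eq_square algebra_simps)
  moreover have "(p + q)\<^sup>2 + (p - r)\<^sup>2 + (q + r)\<^sup>2 \<ge> 0" by simp
  ultimately show ?thesis by linarith
qed

lemma sq2: "((a::real) - b)\<^sup>2 \<le> 2 * a\<^sup>2 + 2 * b\<^sup>2"
  using sq_ineq1[of "a - b" "-b"] by simp

lemma eps_sub:
  fixes u :: "nat \<Rightarrow> 'a::euclidean_space \<Rightarrow> real" and V K :: "'a \<Rightarrow> real"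
  assumes s: "0 < s"
    and um[measurable]: "\<And>k. u k \<in> borel_measurable lborel"
    and Gb: "\<And>k. gagliardo_sq s (u k) \<le> ennreal CG" and CG: "0 \<le> CG"
    and Wb: "\<And>k. weighted_sq V (u k) \<le> ennreal CW" and CW: "0 \<le> CW"
    and Vm[measurable]: "V \<in> borel_measurable lborel" and Km[measurable]: "K \<in> borel_measurable lborel"
    and Vnn: "\<And>x. 0 \<le> V x" and Knn: "\<And>x. 0 \<le> K x"
    and Kcont: "continuous_on UNIV K"
    and R: "R > 0" and c0: "c0 > 0" and Vlow: "\<And>x. R \<le> norm x \<Longrightarrow> c0 \<le> V x * norm x powr (2 * s)"
    and B: "B > 0" and t: "t > 2 * s" and Kup: "\<And>x. R \<le> norm x \<Longrightarrow> K x * norm x powr t \<le> B"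
    and e: "\<epsilon> > 0"
  shows "(\<forall>k. weighted_sq K (u k) < \<infinity>) \<and> (\<exists>r::nat \<Rightarrow> nat. strict_mono r \<and> (\<forall>i j. weighted_sq K (\<lambda>x. u (r i) x - u (r j) x) \<le> ennreal \<epsilon>))"
proof -
  define N where "N = real DIM('a)"
  define p where "p = N + 2 * s"
  have N1: "N \<ge> 1" unfolding N_def using DIM_positive[where 'a='a] by linarith
  have p0: "p > 0" using N1 s by (simp add: p_def)
  have "((\<lambda>L. B / c0 * L powr (2 * s - t) * (4 * CW)) \<longlongrightarrow> B / c0 * 0 * (4 * CW)) at_top"
    by (intro tendsto_mult tendsto_const tendsto_neg_powr filterlim_ident) (use t in simp)
  then have "((\<lambda>L. B / c0 * L powr (2 * s - t) * (4 * CW)) \<longlongrightarrow> 0) at_top" by simp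
  then have ev1: "eventually (\<lambda>L. B / c0 * L powr (2 * s - t) * (4 * CW) < \<epsilon> / 3) at_top"
    using e by (intro order_tendstoD) auto
  obtain L where L: "L \<ge> R" "B / c0 * L powr (2 * s - t) * (4 * CW) < \<epsilon> / 3"
    using eventually_conj[OF ev1 eventually_ge_at_top[of R]] by (auto simp: eventually_at_top_linorder)
  have L0: "L > 0" using L R by simp
  define \<eta> where "\<eta> = B / c0 * L powr (2 * s - t)"
  have \<eta>0: "\<eta> \<ge> 0" using B c0 by (simp add: \<eta>_def)
  have tail: "K x \<le> \<eta> * V x" if "L \<le> norm x" for x
  proof -
    define n where "n = norm x"
    have n: "n \<ge> L" "n > 0" "R \<le> n" using that L0 L by (auto simp: n_def)
    have k1: "K x \<le> B / n powr t" using Kup[of x] n by (simp add: n_def pos_le_divide_eq)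
    have v1: "c0 / n powr (2 * s) \<le> V x" using Vlow[of x] n by (simp add: n_def pos_divide_le_eq)
    have "B / n powr t = B / c0 * n powr (2 * s - t) * (c0 / n powr (2 * s))"
      using n c0 by (simp add: powr_diff field_simps)
    also have "\<dots> \<le> B / c0 * L powr (2 * s - t) * V x"
    proof (intro mult_mono mult_left_mono)
      show "n powr (2 * s - t) \<le> L powr (2 * s - t)" using t n L0 by (intro powr_mono2') auto
    qed (use B c0 v1 Vnn in auto)
    finally show ?thesis using k1 by (simp add: \<eta>_def)
  qed
  define lo :: 'a where "lo = (\<Sum>b\<in>Basis. L *\<^sub>R b)"
  define hi :: 'a where "hi = (\<Sum>b\<in>Basis. (L + 1) *\<^sub>R b)"
  define A where "A = box lo hi"
  have ilo: "lo \<bullet> b = L" if "b \<in> Basis" for b unfolding lo_def using that by (rule inner_sum_left_Basis)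
  have ihi: "hi \<bullet> b = L + 1" if "b \<in> Basis" for b unfolding hi_def using that by (rule inner_sum_left_Basis)
  have mA: "emeasure lborel A = 1"
  proof -
    have "emeasure lborel A = ennreal (\<Prod>b\<in>Basis. (hi - lo) \<bullet> b)"
      unfolding A_def by (intro emeasure_lborel_box) (simp add: ilo ihi)
    also have "(\<Prod>b\<in>Basis. (hi - lo) \<bullet> b) = (\<Prod>b\<in>(Basis::'a set). 1)"
      by (intro prod.cong refl) (simp add: inner_diff_left ilo ihi)
    finally show ?thesis by simp
  qed
  have Amem: "L < y \<bullet> b \<and> y \<bullet> b < L + 1" if "y \<in> A" "b \<in> Basis" for y b
    using that by (auto simp: A_def mem_box ilo ihi)
  have Anorm: "L \<le> norm y \<and> norm y \<le> N * (L + 1)" if "y \<in> A" for y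
  proof
    obtain b :: 'a where b: "b \<in> Basis" using nonempty_Basis by blast
    have "L \<le> \<bar>y \<bullet> b\<bar>" using Amem[OF that b] by auto
    also have "\<dots> \<le> norm y" using b by (rule Basis_le_norm)
    finally show "L \<le> norm y" .
    have "norm y \<le> (\<Sum>b\<in>Basis. \<bar>y \<bullet> b\<bar>)" by (rule norm_le_l1)
    also have "\<dots> \<le> (\<Sum>b\<in>(Basis::'a set). L + 1)"
      by (rule sum_mono) (use Amem[OF that] L0 in force)
    finally show "norm y \<le> N * (L + 1)" by (simp add: N_def)
  qed
  define cA where "cA = c0 / (N * (L + 1)) powr (2 * s)"
  have cA0: "cA > 0" using c0 N1 L0 by (simp add: cA_def)
  have VA: "\<forall>y\<in>A. cA \<le> V y"
  proof
    fix y assume y: "y \<in> A"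
    have ny: "R \<le> norm y" "norm y \<le> N * (L + 1)" using Anorm[OF y] L by auto
    have "c0 \<le> V y * norm y powr (2 * s)" using Vlow ny by simp
    also have "\<dots> \<le> V y * (N * (L + 1)) powr (2 * s)"
      by (intro mult_left_mono powr_mono2) (use ny s Vnn in auto)
    finally show "cA \<le> V y" unfolding cA_def using N1 L0 by (simp add: pos_divide_le_eq)
  qed
  have DA: "\<forall>x\<in>(Qset L :: 'a set). \<forall>y\<in>A. norm (x - y) \<le> N * (2 * L + 1)"
  proof (intro ballI)
    fix x y :: 'a assume x: "x \<in> Qset L" and y: "y \<in> A"
    have "norm (x - y) \<le> (\<Sum>b\<in>Basis. \<bar>(x - y) \<bullet> b\<bar>)" by (rule norm_le_l1)
    also have "\<dots> \<le> (\<Sum>b\<in>(Basis::'a set). 2 * L + 1)"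
    proof (rule sum_mono)
      fix b :: 'a assume b: "b \<in> Basis"
      have "-L \<le> x \<bullet> b" "x \<bullet> b < L" using x b by (auto simp: Qset_def)
      moreover have "L < y \<bullet> b" "y \<bullet> b < L + 1" using Amem[OF y b] by auto
      ultimately show "\<bar>(x - y) \<bullet> b\<bar> \<le> 2 * L + 1" by (auto simp: inner_diff_left abs_le_iff)
    qed
    finally show "norm (x - y) \<le> N * (2 * L + 1)" by (simp add: N_def)
  qed
  obtain mQ where mQ: "emeasure lborel (Qset L :: 'a set) = ennreal mQ" "0 \<le> mQ"
    using Qset_finite[of L, where 'a='a] by (cases "emeasure lborel (Qset L :: 'a set)") auto
  obtain HQ where HQ: "2 * ennreal ((N * (2 * L + 1)) powr p) * ennreal CG
       + ennreal mQ * (2 * ennreal (1 / cA) * ennreal CW) = ennreal HQ" and HQ0: "HQ \<ge> 0"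
  proof -
    have "2 * ennreal ((N * (2 * L + 1)) powr p) * ennreal CG
       + ennreal mQ * (2 * ennreal (1 / cA) * ennreal CW) < \<infinity>"
      by (simp add: ennreal_mult_less_top)
    then show ?thesis using that
      by (cases "2 * ennreal ((N * (2 * L + 1)) powr p) * ennreal CG
       + ennreal mQ * (2 * ennreal (1 / cA) * ennreal CW)") auto
  qed
  have HQb: "(\<integral>\<^sup>+x. indicator (Qset L) x * ennreal ((u k x)\<^sup>2) \<partial>lborel) \<le> ennreal HQ" for k
  proof -
    have "(\<integral>\<^sup>+x. indicator (Qset L) x * ennreal ((u k x)\<^sup>2) \<partial>lborel)
        = emeasure lborel A * (\<integral>\<^sup>+x. indicator (Qset L) x * ennreal ((u k x)\<^sup>2) \<partial>lborel)"
      using mA by simp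
    also have "\<dots> \<le> 2 * ennreal ((N * (2 * L + 1)) powr p) * gagliardo_sq s (u k)
       + emeasure lborel (Qset L :: 'a set) * (2 * ennreal (1 / cA) * weighted_sq V (u k))"
      unfolding p_def
      by (rule loc_bound[OF Qset_sets _ DA s cA0 VA Vm um, folded N_def]) (simp add: A_def)
    also have "\<dots> \<le> 2 * ennreal ((N * (2 * L + 1)) powr p) * ennreal CG
       + ennreal mQ * (2 * ennreal (1 / cA) * ennreal CW)"
      unfolding mQ by (intro add_mono mult_left_mono Gb Wb) auto
    finally show ?thesis unfolding HQ .
  qed
  have "compact (K ` cball 0 (N * L))"
    by (intro compact_continuous_image continuous_on_subset[OF Kcont]) auto
  then obtain M where M: "M > 0" "\<forall>y\<in>K ` cball 0 (N * L). norm y \<le> M"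
    using compact_imp_bounded bounded_pos by metis
  have KM: "K x \<le> M" if "x \<in> Qset L" for x :: 'a
  proof -
    have "x \<in> cball 0 (N * L)" using in_Q[OF that] by (simp add: N_def)
    then show ?thesis using M(2) by force
  qed
  have finK: "weighted_sq K (u k) < \<infinity>" for k
  proof -
    have "weighted_sq K (u k) \<le> (\<integral>\<^sup>+x. ennreal M * (indicator (Qset L) x * ennreal ((u k x)\<^sup>2))
        + ennreal \<eta> * ennreal (V x * (u k x)\<^sup>2) \<partial>lborel)"
      unfolding weighted_sq_def
    proof (intro nn_integral_mono)
      fix x
      show "ennreal (K x * (u k x)\<^sup>2) \<le> ennreal M * (indicator (Qset L) x * ennreal ((u k x)\<^sup>2))
        + ennreal \<eta> * ennreal (V x * (u k x)\<^sup>2)"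
      proof (cases "x \<in> Qset L")
        case True
        have "ennreal (K x * (u k x)\<^sup>2) \<le> ennreal (M * (u k x)\<^sup>2)"
          by (intro ennreal_leI mult_right_mono KM True) simp
        also have "\<dots> = ennreal M * ennreal ((u k x)\<^sup>2)" using M by (intro ennreal_mult') simp
        finally show ?thesis using True by (intro add_increasing2[OF zero_le]) simp
      next
        case False
        then have "L \<le> norm x" by (rule out_Q)
        then have "K x \<le> \<eta> * V x" by (rule tail)
        then have "ennreal (K x * (u k x)\<^sup>2) \<le> ennreal (\<eta> * (V x * (u k x)\<^sup>2))"
          by (intro ennreal_leI) (simp add: mult.assoc[symmetric] mult_right_mono)
        also have "\<dots> = ennreal \<eta> * ennreal (V x * (u k x)\<^sup>2)" by (rule ennreal_mult'[OF \<eta>0])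
        finally show ?thesis by (rule add_increasing[OF zero_le])
      qed
    qed
    also have "\<dots> = ennreal M * (\<integral>\<^sup>+x. indicator (Qset L) x * ennreal ((u k x)\<^sup>2) \<partial>lborel) + ennreal \<eta> * weighted_sq V (u k)"
      unfolding weighted_sq_def by (subst nn_integral_add) (auto simp: nn_integral_cmult)
    also have "\<dots> \<le> ennreal M * ennreal HQ + ennreal \<eta> * ennreal CW"
      by (intro add_mono mult_left_mono HQb Wb) auto
    also have "\<dots> < \<infinity>" by (simp add: ennreal_mult_less_top)
    finally show ?thesis .
  qed
  have "((\<lambda>m::nat. M * 6 * N powr p * (2 * L / real m) powr (2 * s) * CG) \<longlongrightarrow> M * 6 * N powr p * 0 * CG) sequentially"
  proof (intro tendsto_mult tendsto_const)
    show "((\<lambda>m::nat. (2 * L / real m) powr (2 * s)) \<longlongrightarrow> 0) sequentially"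
      by (rule tendsto_zero_powrI[where b="2 * s"]) (use s L0 in \<open>auto intro: lim_const_over_n\<close>)
  qed
  then have "((\<lambda>m::nat. M * 6 * N powr p * (2 * L / real m) powr (2 * s) * CG) \<longlongrightarrow> 0) sequentially"
    by simp
  then have ev2: "eventually (\<lambda>m::nat. M * 6 * N powr p * (2 * L / real m) powr (2 * s) * CG < \<epsilon> / 3) sequentially"
    using e by (intro order_tendstoD) auto
  obtain m :: nat where m: "m > 0" "M * 6 * N powr p * (2 * L / real m) powr (2 * s) * CG < \<epsilon> / 3"
    using eventually_conj[OF ev2 eventually_ge_at_top[of "1::nat"]]
    by (auto simp: eventually_sequentially)
  define \<delta> where "\<delta> = 2 * L / real m"
  have \<delta>0: "\<delta> > 0" using L0 m by (simp add: \<delta>_def)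
  define I where "I = (Basis :: 'a set) \<rightarrow>\<^sub>E {0..<int m}"
  have finI: "finite I" unfolding I_def by (intro finite_PiE) auto
  define \<kappa> where "\<kappa> = (N * \<delta>) powr p / \<delta> ^ DIM('a)"
  have \<kappa>eq: "\<kappa> = N powr p * \<delta> powr (2 * s)"
    unfolding \<kappa>_def p_def N_def by (rule kappa_eq) (use \<delta>0 in auto)
  have \<kappa>0: "\<kappa> \<ge> 0" unfolding \<kappa>eq by simp
  define T where "T z k = (\<integral>\<^sup>+y. \<integral>\<^sup>+x. indicator (cube L \<delta> z) y * indicator (cube L \<delta> z) x * gk s (u k) y x \<partial>lborel \<partial>lborel)" for z k
  have sumT: "(\<Sum>z\<in>I. T z k) \<le> ennreal CG" for k
  proof -
    have "(\<Sum>z\<in>I. T z k) = (\<integral>\<^sup>+y. (\<Sum>z\<in>I. \<integral>\<^sup>+x. indicator (cube L \<delta> z) y * indicator (cube L \<delta> z) x * gk s (u k) y x \<partial>lborel) \<partial>lborel)"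
      unfolding T_def by (rule nn_integral_sum[symmetric]) measurable
    also have "\<dots> = (\<integral>\<^sup>+y. \<integral>\<^sup>+x. (\<Sum>z\<in>I. indicator (cube L \<delta> z) y * indicator (cube L \<delta> z) x * gk s (u k) y x) \<partial>lborel \<partial>lborel)"
      by (intro nn_integral_cong nn_integral_sum[symmetric]) measurable
    also have "\<dots> \<le> (\<integral>\<^sup>+y. \<integral>\<^sup>+x. gk s (u k) y x \<partial>lborel \<partial>lborel)"
    proof (intro nn_integral_mono)
      fix y x
      have "(\<Sum>z\<in>I. indicator (cube L \<delta> z) y * indicator (cube L \<delta> z) x * gk s (u k) y x)
          = (\<Sum>z\<in>I. indicator (cube L \<delta> z) y * indicator (cube L \<delta> z) x :: ennreal) * gk s (u k) y x"
        by (simp add: sum_distrib_right)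
      also have "\<dots> \<le> 1 * gk s (u k) y x"
        by (intro mult_right_mono) (use ind_sum2[OF m(1) L0, of y x] in \<open>auto simp: I_def \<delta>_def\<close>)
      finally show "(\<Sum>z\<in>I. indicator (cube L \<delta> z) y * indicator (cube L \<delta> z) x * gk s (u k) y x) \<le> gk s (u k) y x"
        by simp
    qed
    also have "\<dots> = gagliardo_sq s (u k)" by (simp add: gagliardo_gk)
    also have "\<dots> \<le> ennreal CG" by (rule Gb)
    finally show ?thesis .
  qed
  have Tle: "T z k \<le> ennreal CG" if "z \<in> I" for z k
    using member_le_sum[of z I "\<lambda>z. T z k", OF that _ finI] sumT[of k] by simp
  have cube_in: "cube L \<delta> z \<subseteq> Qset L" if "z \<in> I" for z
    using cube_sub[of z m L] that m(1) L0 by (simp add: I_def \<delta>_def)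
  have ex_c: "\<exists>c. (\<integral>\<^sup>+x. indicator (cube L \<delta> z) x * ennreal ((u k x - c)\<^sup>2) \<partial>lborel) \<le> ennreal \<kappa> * T z k" for z k
  proof -
    have "\<exists>c. (\<integral>\<^sup>+x. indicator (cube L \<delta> z) x * ennreal ((u k x - c)\<^sup>2) \<partial>lborel)
      \<le> ennreal ((real DIM('a) * \<delta>) powr (real DIM('a) + 2 * s) / \<delta> ^ DIM('a)) *
        (\<integral>\<^sup>+y. \<integral>\<^sup>+x. indicator (cube L \<delta> z) y * indicator (cube L \<delta> z) x * gk s (u k) y x \<partial>lborel \<partial>lborel)"
    proof (rule cube_const)
      show "ennreal (\<delta> ^ DIM('a)) \<le> emeasure lborel (cube L \<delta> z)" by (rule cube_measure[OF \<delta>0])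
      show "emeasure lborel (cube L \<delta> z) < \<infinity>" by (rule cube_measure[OF \<delta>0])
      show "\<forall>x\<in>cube L \<delta> z. \<forall>y\<in>cube L \<delta> z. norm (x - y) \<le> real DIM('a) * \<delta>"
        using cube_diam by blast
    qed (use \<delta>0 s cube_sets[of L \<delta> z] in auto)
    then show ?thesis unfolding \<kappa>_def T_def N_def p_def .
  qed
  define cc where "cc z k = (SOME c. (\<integral>\<^sup>+x. indicator (cube L \<delta> z) x * ennreal ((u k x - c)\<^sup>2) \<partial>lborel) \<le> ennreal \<kappa> * T z k)" for z k
  have cc: "(\<integral>\<^sup>+x. indicator (cube L \<delta> z) x * ennreal ((u k x - cc z k)\<^sup>2) \<partial>lborel) \<le> ennreal \<kappa> * T z k" for z k
    unfolding cc_def by (rule someI_ex[OF ex_c])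
  define Bc where "Bc = (2 * HQ + 2 * \<kappa> * CG) / \<delta> ^ DIM('a)"
  have ccb: "(cc z k)\<^sup>2 \<le> Bc" if z: "z \<in> I" for z k
  proof -
    define c where "c = cc z k"
    define q where "q = cube L \<delta> z"
    have "ennreal (c\<^sup>2 * \<delta> ^ DIM('a)) = ennreal (c\<^sup>2) * ennreal (\<delta> ^ DIM('a))"
      by (rule ennreal_mult) (use \<delta>0 in auto)
    also have "\<dots> \<le> ennreal (c\<^sup>2) * emeasure lborel q"
      unfolding q_def by (intro mult_left_mono cube_measure[OF \<delta>0]) auto
    also have "\<dots> = (\<integral>\<^sup>+x. ennreal (c\<^sup>2) * indicator q x \<partial>lborel)"
      by (rule nn_integral_cmult_indicator[symmetric]) (simp add: q_def)
    also have "\<dots> \<le> (\<integral>\<^sup>+x. 2 * (indicator (Qset L) x * ennreal ((u k x)\<^sup>2)) + 2 * (indicator q x * ennreal ((u k x - c)\<^sup>2)) \<partial>lborel)"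
    proof (intro nn_integral_mono)
      fix x
      show "ennreal (c\<^sup>2) * indicator q x \<le> 2 * (indicator (Qset L) x * ennreal ((u k x)\<^sup>2)) + 2 * (indicator q x * ennreal ((u k x - c)\<^sup>2))"
      proof (cases "x \<in> q")
        case True
        then have xQ: "x \<in> Qset L" using cube_in[OF z] by (auto simp: q_def)
        have "c\<^sup>2 \<le> 2 * (c - (c - u k x))\<^sup>2 + 2 * (c - u k x)\<^sup>2" by (rule sq_ineq1)
        then have "c\<^sup>2 \<le> 2 * (u k x)\<^sup>2 + 2 * (u k x - c)\<^sup>2" by (simp add: power2_commute)
        then have "ennreal (c\<^sup>2) \<le> ennreal (2 * (u k x)\<^sup>2 + 2 * (u k x - c)\<^sup>2)" by (rule ennreal_leI)
        also have "\<dots> = 2 * ennreal ((u k x)\<^sup>2) + 2 * ennreal ((u k x - c)\<^sup>2)"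
          by (subst ennreal_plus; simp add: ennreal_mult)
        finally show ?thesis using True xQ by simp
      qed simp
    qed
    also have "\<dots> = 2 * (\<integral>\<^sup>+x. indicator (Qset L) x * ennreal ((u k x)\<^sup>2) \<partial>lborel) + 2 * (\<integral>\<^sup>+x. indicator q x * ennreal ((u k x - c)\<^sup>2) \<partial>lborel)"
      by (subst nn_integral_add) (auto simp: nn_integral_cmult q_def)
    also have "\<dots> \<le> 2 * ennreal HQ + 2 * (ennreal \<kappa> * ennreal CG)"
      using HQb[of k] order_trans[OF cc[of z k] mult_left_mono[OF Tle[OF z, of k]]] unfolding c_def q_def
      by (intro add_mono mult_left_mono) auto
    also have "\<dots> = ennreal (2 * HQ + 2 * \<kappa> * CG)"
      using HQ0 \<kappa>0 CG by (simp add: ennreal_mult' mult_ac)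
    finally have "c\<^sup>2 * \<delta> ^ DIM('a) \<le> 2 * HQ + 2 * \<kappa> * CG"
      using HQ0 \<kappa>0 CG by (subst (asm) ennreal_le_iff) auto
    then show ?thesis unfolding Bc_def c_def using \<delta>0 by (simp add: pos_le_divide_eq)
  qed
  have bnd: "\<forall>z\<in>I. bounded (range (\<lambda>k. cc z k))"
  proof
    fix z assume z: "z \<in> I"
    have "\<bar>cc z k\<bar> \<le> sqrt Bc" for k by (rule real_le_rsqrt) (use ccb[OF z, of k] in simp)
    then show "bounded (range (\<lambda>k. cc z k))" unfolding bounded_iff by auto
  qed
  obtain r where r: "strict_mono r" "\<forall>z\<in>I. \<exists>l. (\<lambda>k. cc z (r k)) \<longlonglongrightarrow> l"
    using subseq_conv_finite[OF finI, of "\<lambda>k z. cc z k"] bnd by auto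
  define \<tau> where "\<tau> = \<epsilon> / (9 * (M * mQ + 1))"
  have MmQ: "M * mQ \<ge> 0" using M mQ by simp
  have \<tau>0: "\<tau> > 0" unfolding \<tau>_def using e MmQ by (intro divide_pos_pos) auto
  obtain N0 where N0: "\<forall>i\<ge>N0. \<forall>j\<ge>N0. (\<Sum>z\<in>I. (cc z (r i) - cc z (r j))\<^sup>2) \<le> \<tau>"
    using tail_sum[OF finI, of "\<lambda>k z. cc z (r k)", OF _ \<tau>0] r(2) by auto
  have main: "weighted_sq K (\<lambda>x. u a x - u b x) \<le> ennreal \<epsilon>"
    if S: "(\<Sum>z\<in>I. (cc z a - cc z b)\<^sup>2) \<le> \<tau>" for a b
  proof -
    define w where "w x = u a x - u b x" for x
    have wm[measurable]: "w \<in> borel_measurable lborel" unfolding w_def by measurable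
    define h where "h z k = (\<integral>\<^sup>+x. indicator (cube L \<delta> z) x * ennreal ((u k x - cc z k)\<^sup>2) \<partial>lborel)" for z k
    have pw: "ennreal (K x * (w x)\<^sup>2) \<le> ennreal M * (\<Sum>z\<in>I. indicator (cube L \<delta> z) x * ennreal ((w x)\<^sup>2))
        + ennreal \<eta> * ennreal (V x * (w x)\<^sup>2)" for x
    proof (cases "x \<in> Qset L")
      case True
      have "(\<Sum>z\<in>I. indicator (cube L \<delta> z) x * ennreal ((w x)\<^sup>2))
          = (\<Sum>z\<in>I. indicator (cube L \<delta> z) x :: ennreal) * ennreal ((w x)\<^sup>2)"
        by (simp add: sum_distrib_right)
      also have "(\<Sum>z\<in>I. indicator (cube L \<delta> z) x :: ennreal) = indicator (Qset L) x"
        unfolding I_def \<delta>_def by (rule ind_sum[OF m(1) L0, symmetric])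
      finally have e1: "(\<Sum>z\<in>I. indicator (cube L \<delta> z) x * ennreal ((w x)\<^sup>2)) = ennreal ((w x)\<^sup>2)"
        using True by simp
      have "ennreal (K x * (w x)\<^sup>2) \<le> ennreal (M * (w x)\<^sup>2)"
        by (intro ennreal_leI mult_right_mono KM True) simp
      also have "\<dots> = ennreal M * ennreal ((w x)\<^sup>2)" using M by (intro ennreal_mult') simp
      finally show ?thesis unfolding e1 by (rule add_increasing2[rotated]) simp
    next
      case False
      then have "L \<le> norm x" by (rule out_Q)
      then have "K x \<le> \<eta> * V x" by (rule tail)
      then have "ennreal (K x * (w x)\<^sup>2) \<le> ennreal (\<eta> * (V x * (w x)\<^sup>2))"
        by (intro ennreal_leI) (simp add: mult.assoc[symmetric] mult_right_mono)
      also have "\<dots> = ennreal \<eta> * ennreal (V x * (w x)\<^sup>2)" by (rule ennreal_mult'[OF \<eta>0])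
      finally show ?thesis by (rule add_increasing[OF zero_le])
    qed
    have "weighted_sq K w \<le> (\<integral>\<^sup>+x. ennreal M * (\<Sum>z\<in>I. indicator (cube L \<delta> z) x * ennreal ((w x)\<^sup>2))
        + ennreal \<eta> * ennreal (V x * (w x)\<^sup>2) \<partial>lborel)"
      unfolding weighted_sq_def by (intro nn_integral_mono pw)
    also have "\<dots> = ennreal M * (\<Sum>z\<in>I. \<integral>\<^sup>+x. indicator (cube L \<delta> z) x * ennreal ((w x)\<^sup>2) \<partial>lborel)
        + ennreal \<eta> * weighted_sq V w"
      unfolding weighted_sq_def
      by (subst nn_integral_add) (auto simp: nn_integral_cmult nn_integral_sum)
    finally have st1: "weighted_sq K w \<le> ennreal M * (\<Sum>z\<in>I. \<integral>\<^sup>+x. indicator (cube L \<delta> z) x * ennreal ((w x)\<^sup>2) \<partial>lborel)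
        + ennreal \<eta> * weighted_sq V w" .
    have WV: "weighted_sq V w \<le> ennreal (4 * CW)"
    proof -
      have "weighted_sq V w \<le> (\<integral>\<^sup>+x. 2 * ennreal (V x * (u a x)\<^sup>2) + 2 * ennreal (V x * (u b x)\<^sup>2) \<partial>lborel)"
        unfolding weighted_sq_def
      proof (intro nn_integral_mono)
        fix x
        have "V x * (w x)\<^sup>2 \<le> V x * (2 * (u a x)\<^sup>2 + 2 * (u b x)\<^sup>2)"
          unfolding w_def by (intro mult_left_mono sq2 Vnn)
        then have "ennreal (V x * (w x)\<^sup>2) \<le> ennreal (2 * (V x * (u a x)\<^sup>2) + 2 * (V x * (u b x)\<^sup>2))"
          by (intro ennreal_leI) (simp add: algebra_simps)
        also have "\<dots> = 2 * ennreal (V x * (u a x)\<^sup>2) + 2 * ennreal (V x * (u b x)\<^sup>2)"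
          using Vnn[of x] by (subst ennreal_plus; simp add: ennreal_mult)
        finally show "ennreal (V x * (w x)\<^sup>2) \<le> 2 * ennreal (V x * (u a x)\<^sup>2) + 2 * ennreal (V x * (u b x)\<^sup>2)" .
      qed
      also have "\<dots> = 2 * weighted_sq V (u a) + 2 * weighted_sq V (u b)"
        unfolding weighted_sq_def by (subst nn_integral_add) (auto simp: nn_integral_cmult)
      also have "\<dots> \<le> 2 * ennreal CW + 2 * ennreal CW" by (intro add_mono mult_left_mono Wb) auto
      also have "\<dots> = ennreal (2 * CW + 2 * CW)" using CW by (subst ennreal_plus) (auto simp: ennreal_mult')
      also have "\<dots> = ennreal (4 * CW)" by simp
      finally show ?thesis .
    qed
    have pc: "(\<integral>\<^sup>+x. indicator (cube L \<delta> z) x * ennreal ((w x)\<^sup>2) \<partial>lborel)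
        \<le> 3 * h z a + 3 * h z b + 3 * (ennreal ((cc z a - cc z b)\<^sup>2) * emeasure lborel (cube L \<delta> z))" for z
    proof -
      have "(\<integral>\<^sup>+x. indicator (cube L \<delta> z) x * ennreal ((w x)\<^sup>2) \<partial>lborel)
          \<le> (\<integral>\<^sup>+x. 3 * (indicator (cube L \<delta> z) x * ennreal ((u a x - cc z a)\<^sup>2))
             + 3 * (indicator (cube L \<delta> z) x * ennreal ((u b x - cc z b)\<^sup>2))
             + 3 * (ennreal ((cc z a - cc z b)\<^sup>2) * indicator (cube L \<delta> z) x) \<partial>lborel)"
      proof (intro nn_integral_mono)
        fix x
        have "(w x)\<^sup>2 = ((u a x - cc z a) - (u b x - cc z b) + (cc z a - cc z b))\<^sup>2"
          unfolding w_def by (simp add: algebra_simps)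
        also have "\<dots> \<le> 3 * (u a x - cc z a)\<^sup>2 + 3 * (u b x - cc z b)\<^sup>2 + 3 * (cc z a - cc z b)\<^sup>2"
          by (rule sq3)
        finally have "ennreal ((w x)\<^sup>2) \<le> ennreal (3 * (u a x - cc z a)\<^sup>2 + 3 * (u b x - cc z b)\<^sup>2 + 3 * (cc z a - cc z b)\<^sup>2)"
          by (rule ennreal_leI)
        also have "\<dots> = 3 * ennreal ((u a x - cc z a)\<^sup>2) + 3 * ennreal ((u b x - cc z b)\<^sup>2) + 3 * ennreal ((cc z a - cc z b)\<^sup>2)"
          by (simp add: ennreal_mult')
        finally show "indicator (cube L \<delta> z) x * ennreal ((w x)\<^sup>2)
          \<le> 3 * (indicator (cube L \<delta> z) x * ennreal ((u a x - cc z a)\<^sup>2))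
             + 3 * (indicator (cube L \<delta> z) x * ennreal ((u b x - cc z b)\<^sup>2))
             + 3 * (ennreal ((cc z a - cc z b)\<^sup>2) * indicator (cube L \<delta> z) x)"
          by (cases "x \<in> cube L \<delta> z") auto
      qed
      also have "\<dots> = 3 * h z a + 3 * h z b + 3 * (ennreal ((cc z a - cc z b)\<^sup>2) * emeasure lborel (cube L \<delta> z))"
        unfolding h_def
        by (simp add: nn_integral_add nn_integral_cmult nn_integral_cmult_indicator)
      finally show ?thesis .
    qed
    have sh: "(\<Sum>z\<in>I. h z k) \<le> ennreal \<kappa> * ennreal CG" for k
    proof -
      have "(\<Sum>z\<in>I. h z k) \<le> (\<Sum>z\<in>I. ennreal \<kappa> * T z k)"
        unfolding h_def by (intro sum_mono cc)
      also have "\<dots> = ennreal \<kappa> * (\<Sum>z\<in>I. T z k)" by (simp add: sum_distrib_left)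
      also have "\<dots> \<le> ennreal \<kappa> * ennreal CG" by (intro mult_left_mono sumT) simp
      finally show ?thesis .
    qed
    have sd: "(\<Sum>z\<in>I. ennreal ((cc z a - cc z b)\<^sup>2) * emeasure lborel (cube L \<delta> z)) \<le> ennreal \<tau> * ennreal mQ"
    proof -
      have "(\<Sum>z\<in>I. ennreal ((cc z a - cc z b)\<^sup>2) * emeasure lborel (cube L \<delta> z))
          \<le> (\<Sum>z\<in>I. ennreal ((cc z a - cc z b)\<^sup>2) * ennreal mQ)"
      proof (intro sum_mono mult_left_mono)
        fix z assume "z \<in> I"
        then have "emeasure lborel (cube L \<delta> z) \<le> emeasure lborel (Qset L :: 'a set)"
          by (intro emeasure_mono cube_in Qset_sets)
        then show "emeasure lborel (cube L \<delta> z) \<le> ennreal mQ" using mQ by simp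
      qed simp
      also have "\<dots> = ennreal (\<Sum>z\<in>I. (cc z a - cc z b)\<^sup>2) * ennreal mQ"
        by (simp add: sum_distrib_right[symmetric])
      also have "\<dots> \<le> ennreal \<tau> * ennreal mQ" by (intro mult_right_mono ennreal_leI S) simp
      finally show ?thesis .
    qed
    have "(\<Sum>z\<in>I. \<integral>\<^sup>+x. indicator (cube L \<delta> z) x * ennreal ((w x)\<^sup>2) \<partial>lborel)
        \<le> (\<Sum>z\<in>I. 3 * h z a + 3 * h z b + 3 * (ennreal ((cc z a - cc z b)\<^sup>2) * emeasure lborel (cube L \<delta> z)))"
      by (intro sum_mono pc)
    also have "\<dots> = 3 * (\<Sum>z\<in>I. h z a) + 3 * (\<Sum>z\<in>I. h z b) + 3 * (\<Sum>z\<in>I. ennreal ((cc z a - cc z b)\<^sup>2) * emeasure lborel (cube L \<delta> z))"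
      by (simp add: sum.distrib sum_distrib_left)
    also have "\<dots> \<le> 3 * (ennreal \<kappa> * ennreal CG) + 3 * (ennreal \<kappa> * ennreal CG) + 3 * (ennreal \<tau> * ennreal mQ)"
      by (intro add_mono mult_left_mono sh sd) auto
    finally have st2: "(\<Sum>z\<in>I. \<integral>\<^sup>+x. indicator (cube L \<delta> z) x * ennreal ((w x)\<^sup>2) \<partial>lborel)
        \<le> 3 * (ennreal \<kappa> * ennreal CG) + 3 * (ennreal \<kappa> * ennreal CG) + 3 * (ennreal \<tau> * ennreal mQ)" .
    have "weighted_sq K w \<le> ennreal M * (3 * (ennreal \<kappa> * ennreal CG) + 3 * (ennreal \<kappa> * ennreal CG) + 3 * (ennreal \<tau> * ennreal mQ))
        + ennreal \<eta> * ennreal (4 * CW)"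
      using st1 st2 WV by (meson add_mono mult_left_mono order_trans zero_le)
    also have "\<dots> = ennreal M * (ennreal (3 * \<kappa> * CG) + ennreal (3 * \<kappa> * CG) + ennreal (3 * \<tau> * mQ)) + ennreal \<eta> * ennreal (4 * CW)"
      using en3[OF \<kappa>0 CG] en3[of \<tau> mQ] \<tau>0 mQ(2) by simp
    also have "\<dots> = ennreal (M * (2 * (3 * \<kappa> * CG) + 3 * \<tau> * mQ) + \<eta> * (4 * CW))"
      by (rule en_final) (use M \<kappa>0 CG \<tau>0 mQ \<eta>0 CW in auto)
    also have "\<dots> \<le> ennreal \<epsilon>"
    proof (intro ennreal_leI)
      have a1: "M * 6 * \<kappa> * CG < \<epsilon> / 3" using m(2) unfolding \<kappa>eq \<delta>_def by (simp add: mult_ac)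
      have "3 * M * \<tau> * mQ = \<epsilon> / 3 * (M * mQ / (M * mQ + 1))"
        unfolding \<tau>_def using MmQ by (simp add: field_simps)
      also have "\<dots> \<le> \<epsilon> / 3 * 1"
        using MmQ e by (intro mult_left_mono) (auto simp: field_simps)
      finally have a2: "3 * M * \<tau> * mQ \<le> \<epsilon> / 3" by simp
      have a3: "\<eta> * (4 * CW) < \<epsilon> / 3" using L(2) unfolding \<eta>_def by (simp add: mult_ac)
      show "M * (2 * (3 * \<kappa> * CG) + 3 * \<tau> * mQ) + \<eta> * (4 * CW) \<le> \<epsilon>"
        using a1 a2 a3 by (simp add: algebra_simps)
    qed
    finally show ?thesis unfolding w_def .
  qed
  define r' where "r' k = r (k + N0)" for k
  have sm: "strict_mono r'" using r(1) unfolding r'_def strict_mono_def by simp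
  have al: "\<forall>i j. weighted_sq K (\<lambda>x. u (r' i) x - u (r' j) x) \<le> ennreal \<epsilon>"
    using main N0 unfolding r'_def by simp
  show ?thesis using finK sm al by blast
qed


lemma diag_gen:
  fixes P :: "nat \<Rightarrow> (nat \<Rightarrow> nat) \<Rightarrow> bool"
  assumes ex: "\<And>n s. strict_mono s \<Longrightarrow> \<exists>r'::nat \<Rightarrow> nat. strict_mono r' \<and> P n (s \<circ> r')"
    and stable: "\<And>r s n. strict_mono r \<Longrightarrow> P n s \<Longrightarrow> P n (s \<circ> r)"
  shows "\<exists>d. strict_mono d \<and> (\<forall>k. P k (d \<circ> (+) (Suc k)))"
proof -
  interpret subseqs P by unfold_locales (erule ex)
  show ?thesis using subseq_diagseq diagseq_holds stable by blast
qed

lemma rf: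
  fixes w :: "nat \<Rightarrow> 'a::euclidean_space \<Rightarrow> real" and K :: "'a \<Rightarrow> real"
  assumes wm[measurable]: "\<And>k. w k \<in> borel_measurable lborel"
    and Km[measurable]: "K \<in> borel_measurable lborel" and Knn: "\<And>x. 0 \<le> K x"
    and C: "\<And>i j. i \<le> j \<Longrightarrow> weighted_sq K (\<lambda>x. w i x - w j x) \<le> ennreal ((1/4)^i)"
    and fin0: "weighted_sq K (w 0) < \<infinity>"
  shows "\<exists>v. v \<in> borel_measurable lborel \<and> weighted_sq K v < \<infinity> \<and>
     (\<lambda>k. weighted_sq K (\<lambda>x. w k x - v x)) \<longlonglongrightarrow> 0"
proof -
  define v where "v x = lim (\<lambda>i. w i x)" for x
  have vm[measurable]: "v \<in> borel_measurable lborel"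
    unfolding v_def by (rule borel_measurable_lim_metric) simp
  define S where "S x = (\<Sum>i. ennreal (2^i) * ennreal (K x * (w i x - w (Suc i) x)\<^sup>2))" for x
  have Sm[measurable]: "S \<in> borel_measurable lborel" unfolding S_def by measurable
  have "(\<integral>\<^sup>+x. S x \<partial>lborel) = (\<Sum>i. ennreal (2^i) * weighted_sq K (\<lambda>x. w i x - w (Suc i) x))"
    unfolding S_def weighted_sq_def by (subst nn_integral_suminf) (auto simp: nn_integral_cmult)
  also have "\<dots> \<le> (\<Sum>i. ennreal ((1/2)^i))"
  proof (rule suminf_le)
    fix i
    have "ennreal (2^i) * weighted_sq K (\<lambda>x. w i x - w (Suc i) x) \<le> ennreal (2^i) * ennreal ((1/4)^i)"
      by (intro mult_left_mono C) auto
    also have "\<dots> = ennreal (2^i * (1/4)^i)" by (rule ennreal_mult'[symmetric]) simp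
    also have "(2::real)^i * (1/4)^i = (1/2)^i" by (simp add: power_mult_distrib[symmetric])
    finally show "ennreal (2^i) * weighted_sq K (\<lambda>x. w i x - w (Suc i) x) \<le> ennreal ((1/2)^i)" .
  qed auto
  also have "\<dots> = ennreal (\<Sum>i. (1/2)^i)" by (rule suminf_ennreal2) (auto intro: summable_geometric)
  also have "(\<Sum>i. (1/2::real)^i) = 2" using suminf_geometric[of "1/2::real"] by simp
  finally have "(\<integral>\<^sup>+x. S x \<partial>lborel) \<noteq> \<infinity>" by (auto simp: top_unique)
  then have aeS: "AE x in lborel. S x \<noteq> \<infinity>" by (intro nn_integral_PInf_AE) simp_all
  have conv: "(\<lambda>i. w i x) \<longlonglongrightarrow> v x" if Sx: "S x \<noteq> \<infinity>" and Kx: "K x > 0" for x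
  proof -
    obtain s0 where s0: "S x = ennreal s0" "0 \<le> s0" using Sx by (cases "S x") auto
    have trm: "2^i * (K x * (w i x - w (Suc i) x)\<^sup>2) \<le> s0" for i
    proof -
      have "(\<Sum>j\<in>{i}. ennreal (2^j) * ennreal (K x * (w j x - w (Suc j) x)\<^sup>2)) \<le> S x"
        unfolding S_def by (rule sum_le_suminf) auto
      then have "ennreal (2^i * (K x * (w i x - w (Suc i) x)\<^sup>2)) \<le> ennreal s0"
        using s0 by (simp add: ennreal_mult')
      then show ?thesis using s0(2) by (simp add: ennreal_le_iff)
    qed
    define g where "g i = sqrt (s0 / K x) * sqrt (1/2) ^ i" for i
    have bound: "norm (w (Suc i) x - w i x) \<le> g i" for i
    proof -
      have "(w (Suc i) x - w i x)\<^sup>2 \<le> s0 / K x * (1/2)^i"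
        using trm[of i] Kx by (simp add: field_simps power2_commute power_one_over)
      then have "\<bar>w (Suc i) x - w i x\<bar> \<le> sqrt (s0 / K x * (1/2)^i)"
        by (intro real_le_rsqrt) simp
      also have "\<dots> = g i" by (simp only: g_def real_sqrt_mult real_sqrt_power)
      finally show ?thesis by simp
    qed
    have "summable g" unfolding g_def by (intro summable_mult summable_geometric) simp
    then have "summable (\<lambda>i. w (Suc i) x - w i x)" by (rule summable_comparison_test'[OF _ bound])
    then have "(\<lambda>n. \<Sum>i<n. w (Suc i) x - w i x) \<longlonglongrightarrow> (\<Sum>i. w (Suc i) x - w i x)"
      by (rule summable_LIMSEQ)
    then have "(\<lambda>n. w n x - w 0 x) \<longlonglongrightarrow> (\<Sum>i. w (Suc i) x - w i x)"
      using sum_lessThan_telescope[of "\<lambda>i. w i x"] by simp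
    then have "(\<lambda>n. (w n x - w 0 x) + w 0 x) \<longlonglongrightarrow> (\<Sum>i. w (Suc i) x - w i x) + w 0 x"
      by (intro tendsto_add tendsto_const)
    then have lim: "(\<lambda>n. w n x) \<longlonglongrightarrow> (\<Sum>i. w (Suc i) x - w i x) + w 0 x" by simp
    then have "v x = (\<Sum>i. w (Suc i) x - w i x) + w 0 x" unfolding v_def by (rule limI)
    then show ?thesis using lim by simp
  qed
  have le: "weighted_sq K (\<lambda>x. w k x - v x) \<le> ennreal ((1/4)^k)" for k
  proof -
    have "weighted_sq K (\<lambda>x. w k x - v x) \<le> (\<integral>\<^sup>+x. liminf (\<lambda>j. ennreal (K x * (w k x - w j x)\<^sup>2)) \<partial>lborel)"
      unfolding weighted_sq_def
    proof (rule nn_integral_mono_AE)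
      show "AE x in lborel. ennreal (K x * (w k x - v x)\<^sup>2) \<le> liminf (\<lambda>j. ennreal (K x * (w k x - w j x)\<^sup>2))"
        using aeS
      proof (rule AE_mp, intro AE_I2 impI)
        fix x assume Sx: "S x \<noteq> \<infinity>"
        show "ennreal (K x * (w k x - v x)\<^sup>2) \<le> liminf (\<lambda>j. ennreal (K x * (w k x - w j x)\<^sup>2))"
        proof (cases "K x > 0")
          case True
          have "(\<lambda>j. K x * (w k x - w j x)\<^sup>2) \<longlonglongrightarrow> K x * (w k x - v x)\<^sup>2"
            using conv[OF Sx True] by (intro tendsto_intros)
          then have "(\<lambda>j. ennreal (K x * (w k x - w j x)\<^sup>2)) \<longlonglongrightarrow> ennreal (K x * (w k x - v x)\<^sup>2)"
            by (rule tendsto_ennrealI)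
          then have "liminf (\<lambda>j. ennreal (K x * (w k x - w j x)\<^sup>2)) = ennreal (K x * (w k x - v x)\<^sup>2)"
            by (intro lim_imp_Liminf) simp_all
          then show ?thesis by simp
        next
          case False
          then have "K x = 0" using Knn[of x] by simp
          then show ?thesis by simp
        qed
      qed
    qed
    also have "\<dots> \<le> liminf (\<lambda>j. weighted_sq K (\<lambda>x. w k x - w j x))"
      unfolding weighted_sq_def by (rule nn_integral_liminf) simp
    also have "\<dots> \<le> limsup (\<lambda>j. weighted_sq K (\<lambda>x. w k x - w j x))"
      by (rule Liminf_le_Limsup) simp
    also have "\<dots> \<le> ennreal ((1/4)^k)"
      by (rule Limsup_bounded) (auto simp: eventually_sequentially intro!: exI[of _ k] C)
    finally show ?thesis .
  qed
  have limit: "(\<lambda>k. weighted_sq K (\<lambda>x. w k x - v x)) \<longlonglongrightarrow> 0"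
  proof (rule tendsto_sandwich[of "\<lambda>_. 0" _ _ "\<lambda>k. ennreal ((1/4)^k)"])
    show "(\<lambda>k. ennreal ((1/4)^k)) \<longlonglongrightarrow> 0"
      using tendsto_ennrealI[OF LIMSEQ_power_zero[of "1/4::real"]] by simp
  qed (use le in auto)
  have finv: "weighted_sq K v < \<infinity>"
  proof -
    have "weighted_sq K v \<le> (\<integral>\<^sup>+x. 2 * ennreal (K x * (w 0 x - v x)\<^sup>2) + 2 * ennreal (K x * (w 0 x)\<^sup>2) \<partial>lborel)"
      unfolding weighted_sq_def
    proof (intro nn_integral_mono)
      fix x
      have "(v x)\<^sup>2 \<le> 2 * (v x - w 0 x)\<^sup>2 + 2 * (w 0 x)\<^sup>2" by (rule sq_ineq1)
      then have "K x * (v x)\<^sup>2 \<le> K x * (2 * (w 0 x - v x)\<^sup>2 + 2 * (w 0 x)\<^sup>2)"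
        by (intro mult_left_mono Knn) (simp add: power2_commute)
      then have "ennreal (K x * (v x)\<^sup>2) \<le> ennreal (2 * (K x * (w 0 x - v x)\<^sup>2) + 2 * (K x * (w 0 x)\<^sup>2))"
        by (intro ennreal_leI) (simp add: algebra_simps)
      also have "\<dots> = 2 * ennreal (K x * (w 0 x - v x)\<^sup>2) + 2 * ennreal (K x * (w 0 x)\<^sup>2)"
        using Knn[of x] by (subst ennreal_plus; simp add: ennreal_mult)
      finally show "ennreal (K x * (v x)\<^sup>2) \<le> 2 * ennreal (K x * (w 0 x - v x)\<^sup>2) + 2 * ennreal (K x * (w 0 x)\<^sup>2)" .
    qed
    also have "\<dots> = 2 * weighted_sq K (\<lambda>x. w 0 x - v x) + 2 * weighted_sq K (w 0)"
      unfolding weighted_sq_def by (subst nn_integral_add) (auto simp: nn_integral_cmult)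
    also have "\<dots> \<le> 2 * ennreal ((1/4)^0) + 2 * weighted_sq K (w 0)"
      by (intro add_mono mult_left_mono le) auto
    also have "\<dots> < \<infinity>" using fin0 by (simp add: ennreal_mult_less_top)
    finally show ?thesis .
  qed
  show ?thesis using vm finv limit by blast
qed



theorem corollary4p3:
  fixes s eps t :: real and V K :: "'a::euclidean_space \<Rightarrow> real"
  assumes "0 < s" "s < 1" "real DIM('a) > 2 * s" "eps > 0"
    and "continuous_on UNIV V" "\<forall>x. V x \<ge> 0"
    and "Liminf at_infinity (\<lambda>x. ereal (V x * norm x powr (2 * s))) > 0"
    and "continuous_on UNIV K" "\<forall>x. K x \<ge> 0"
    and "t > 2 * s"
    and "Limsup at_infinity (\<lambda>x. ereal (K x * norm x powr t)) < \<infinity>"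
  shows "compact_embedding_HsV_L2w s eps V K"
proof -
  have s: "0 < s" using assms(1) .
  have Vm[measurable]: "V \<in> borel_measurable lborel"
    using borel_measurable_continuous_onI[OF assms(5)] by simp
  have Km[measurable]: "K \<in> borel_measurable lborel"
    using borel_measurable_continuous_onI[OF assms(8)] by simp
  have Vnn: "\<And>x. 0 \<le> V x" and Knn: "\<And>x. 0 \<le> K x" using assms(6,9) by auto
  obtain c0 where c0: "0 < ereal c0" "ereal c0 < Liminf at_infinity (\<lambda>x. ereal (V x * norm x powr (2 * s)))"
    using ereal_dense2[OF assms(7)] by blast
  have "eventually (\<lambda>x. ereal c0 < ereal (V x * norm x powr (2 * s))) at_infinity"
    by (rule less_LiminfD[OF c0(2)])
  then obtain b1 where b1: "\<And>x. b1 \<le> norm x \<Longrightarrow> c0 < V x * norm x powr (2 * s)"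
    by (auto simp: eventually_at_infinity)
  obtain B0 where B0: "Limsup at_infinity (\<lambda>x. ereal (K x * norm x powr t)) < ereal B0"
    using ereal_dense2[OF assms(11)] by blast
  have "eventually (\<lambda>x. ereal (K x * norm x powr t) < ereal B0) at_infinity"
    by (rule Limsup_lessD[OF B0])
  then obtain b2 where b2: "\<And>x. b2 \<le> norm x \<Longrightarrow> K x * norm x powr t < B0"
    by (auto simp: eventually_at_infinity)
  define R where "R = max (max b1 b2) 1"
  define B where "B = max B0 1"
  have R: "R > 0" by (simp add: R_def)
  have c00: "c0 > 0" using c0(1) by simp
  have B: "B > 0" by (simp add: B_def)
  have Vlow: "\<And>x. R \<le> norm x \<Longrightarrow> c0 \<le> V x * norm x powr (2 * s)"
    using b1 by (force simp: R_def less_imp_le)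
  have Kup: "\<And>x. R \<le> norm x \<Longrightarrow> K x * norm x powr t \<le> B"
    using b2 by (force simp: R_def B_def less_imp_le)
  note es = eps_sub[OF s _ _ _ _ _ Vm Km Vnn Knn assms(8) R c00 Vlow B assms(10) Kup]
  have incl: "weighted_sq K u < \<infinity>" if u: "u \<in> HsV s eps V" for u
  proof -
    have um: "u \<in> borel_measurable lborel" using u by (simp add: HsV_def)
    obtain CG where CG: "gagliardo_sq s u = ennreal CG" "0 \<le> CG"
      using u by (cases "gagliardo_sq s u") (auto simp: HsV_def)
    obtain CW where CW: "weighted_sq V u = ennreal CW" "0 \<le> CW"
      using u by (cases "weighted_sq V u") (auto simp: HsV_def)
    have "(\<forall>k::nat. weighted_sq K ((\<lambda>k. u) k) < \<infinity>) \<and>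
      (\<exists>r::nat \<Rightarrow> nat. strict_mono r \<and> (\<forall>i j. weighted_sq K (\<lambda>x. (\<lambda>k. u) (r i) x - (\<lambda>k. u) (r j) x) \<le> ennreal 1))"
      by (rule es[of "\<lambda>k. u" CG CW 1]) (use um CG CW in auto)
    then show ?thesis by simp
  qed
  show ?thesis
    unfolding compact_embedding_HsV_L2w_def
  proof (intro conjI allI impI)
    show "HsV s eps V \<subseteq> L2w K" using incl by (auto simp: HsV_def L2w_def)
  next
    fix u :: "nat \<Rightarrow> 'a \<Rightarrow> real" and C :: real
    assume uC: "\<forall>k. u k \<in> HsV s eps V \<and> HsV_norm_sq s eps V (u k) \<le> ennreal C"
    define C' where "C' = max C 0"
    define e2 where "e2 = eps powr (2 * s)"
    have e2: "e2 > 0" using assms(4) by (simp add: e2_def)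
    have um[measurable]: "u k \<in> borel_measurable lborel" for k using uC by (simp add: HsV_def)
    have nb: "ennreal e2 * gagliardo_sq s (u k) + weighted_sq V (u k) \<le> ennreal C'" for k
    proof -
      have "ennreal C \<le> ennreal C'" by (intro ennreal_leI) (simp add: C'_def)
      then show ?thesis using uC by (auto simp: HsV_norm_sq_def e2_def intro: order_trans)
    qed
    have Wb: "weighted_sq V (u k) \<le> ennreal C'" for k
      by (rule order_trans[OF add_increasing[OF zero_le order_refl] nb])
    have Gb: "gagliardo_sq s (u k) \<le> ennreal (C' / e2)" for k
    proof -
      have h: "ennreal e2 * gagliardo_sq s (u k) \<le> ennreal C'"
        by (rule order_trans[OF add_increasing2[OF zero_le order_refl] nb])
      have "gagliardo_sq s (u k) = ennreal (1 / e2) * (ennreal e2 * gagliardo_sq s (u k))"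
        using e2 by (simp add: mult.assoc[symmetric] ennreal_mult[symmetric])
      also have "\<dots> \<le> ennreal (1 / e2) * ennreal C'" by (intro mult_left_mono h) simp
      also have "\<dots> = ennreal (C' / e2)" using e2 by (simp add: ennreal_mult[symmetric] C'_def)
      finally show ?thesis .
    qed
    have C'0: "0 \<le> C'" by (simp add: C'_def)
    define P where "P n r \<longleftrightarrow> (\<forall>i j. weighted_sq K (\<lambda>x. u (r i) x - u (r j) x) \<le> ennreal ((1/4)^n))"
      for n and r :: "nat \<Rightarrow> nat"
    have "\<exists>d. strict_mono d \<and> (\<forall>k. P k (d \<circ> (+) (Suc k)))"
    proof (rule diag_gen)
      fix n and sq :: "nat \<Rightarrow> nat" assume "strict_mono sq"
      have "(\<forall>k. weighted_sq K (u (sq k)) < \<infinity>) \<and>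
        (\<exists>r::nat \<Rightarrow> nat. strict_mono r \<and> (\<forall>i j. weighted_sq K (\<lambda>x. u (sq (r i)) x - u (sq (r j)) x) \<le> ennreal ((1/4)^n)))"
        by (rule es[of "\<lambda>k. u (sq k)" "C' / e2" C' "(1/4)^n"]) (use Gb Wb C'0 e2 in auto)
      then show "\<exists>r'::nat \<Rightarrow> nat. strict_mono r' \<and> P n (sq \<circ> r')" by (auto simp: P_def)
    next
      fix r sq :: "nat \<Rightarrow> nat" and n :: nat assume "strict_mono r" "P n sq"
      then show "P n (sq \<circ> r)" by (simp add: P_def)
    qed
    then obtain d where d: "strict_mono d" "\<And>k. P k (d \<circ> (+) (Suc k))" by blast
    define R' where "R' i = d (Suc i)" for i
    have smR: "strict_mono R'" using d(1) unfolding R'_def strict_mono_def by simp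
    have Cw: "weighted_sq K (\<lambda>x. u (R' i) x - u (R' j) x) \<le> ennreal ((1/4)^i)" if "i \<le> j" for i j
    proof -
      have "weighted_sq K (\<lambda>x. u ((d \<circ> (+) (Suc i)) 0) x - u ((d \<circ> (+) (Suc i)) (j - i)) x) \<le> ennreal ((1/4)^i)"
        using d(2)[of i] by (simp only: P_def)
      moreover have "(d \<circ> (+) (Suc i)) (j - i) = R' j" using that by (simp add: R'_def)
      moreover have "(d \<circ> (+) (Suc i)) 0 = R' i" by (simp add: R'_def)
      ultimately show ?thesis by simp
    qed
    have fin0: "weighted_sq K (u (R' 0)) < \<infinity>" using incl uC by blast
    obtain v where v: "v \<in> borel_measurable lborel" "weighted_sq K v < \<infinity>"
      "(\<lambda>k. weighted_sq K (\<lambda>x. u (R' k) x - v x)) \<longlonglongrightarrow> 0"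
      using rf[of "\<lambda>k. u (R' k)" K, OF um Km Knn Cw fin0] by blast
    show "\<exists>r v. strict_mono r \<and> v \<in> L2w K \<and> (\<lambda>k. weighted_sq K (\<lambda>x. u (r k) x - v x)) \<longlonglongrightarrow> 0"
      using smR v by (auto simp: L2w_def)
  qed
qed


end
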